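(* Let $\mathbb{F}$ be a field, let $B_1,\dots,B_d$ be $n\times n$ matrices, $P=B_1\boxtimes\cdots\boxtimes B_d$, and let $M$ be an $n^d\times n^d$ matrix. Then for every $\kappa\subseteq[d]$, \[(PM)^{\top_\kappa}=L\,M^{\top_\kappa}R,\qquad L=\mathop{\boxtimes}_{k=1}^d L_k,\ \ R=\mathop{\boxtimes}_{k=1}^d R_k,\] where $L_k=I_n$, $R_k=B_k^{\mathsf T}$ if $k\in\kappa$, and $L_k=B_k$, $R_k=I_n$ if $k\notin\kappa$. Moreover, if $B_1,\dots,B_d$ are nonsingular then $\mathrm{rank}((PM)^{\top_\kappa})=\mathrm{rank}(M^{\top_\kappa})$.
   Context: $\boxtimes$ is the Kronecker product; rows and columns of $n^d\times n^d$ matrices are indexed by $[n]^d$ consistently with the Kronecker product. For $k\in[d]$, $M^{\top_k}$ swaps the $k$-th row index with the $k$-th column index; $M^{\top_\kappa}$ composes these over $k\in\kappa$. *)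

theory Defs
  imports "Jordan_Normal_Form.DL_Rank"
begin

definition kron :: "'a::times mat \<Rightarrow> 'a mat \<Rightarrow> 'a mat" where
  "kron A B = mat (dim_row A * dim_row B) (dim_col A * dim_col B)
     (\<lambda>(i, j). A $$ (i div dim_row B, j div dim_col B) * B $$ (i mod dim_row B, j mod dim_col B))"

definition kron_prod :: "nat \<Rightarrow> (nat \<Rightarrow> 'a::comm_ring_1 mat) \<Rightarrow> 'a mat" where
  "kron_prod d B = foldr (\<lambda>k P. kron (B k) P) [0..<d] (1\<^sub>m 1)"

text \<open>An index i < n^d corresponds to the multi-index (digit n d 0 i, ..., digit n d (d-1) i)
  in [n]^d, consistently with the Kronecker product (factor 0 is most significant).\<close>
definition digit :: "nat \<Rightarrow> nat \<Rightarrow> nat \<Rightarrow> nat \<Rightarrow> nat" where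
  "digit n d k i = (i div n ^ (d - 1 - k)) mod n"

definition of_digits :: "nat \<Rightarrow> nat \<Rightarrow> (nat \<Rightarrow> nat) \<Rightarrow> nat" where
  "of_digits n d f = (\<Sum>k<d. f k * n ^ (d - 1 - k))"

text \<open>Partial transpose M^{T_kappa} of an n^d x n^d matrix: for each k in kappa, the k-th row
  digit is swapped with the k-th column digit (this is the composition of the single partial
  transposes over k in kappa, which commute).\<close>
definition ptrans :: "nat \<Rightarrow> nat \<Rightarrow> nat set \<Rightarrow> 'a mat \<Rightarrow> 'a mat" where
  "ptrans n d \<kappa> M = mat (n ^ d) (n ^ d) (\<lambda>(i, j).
     M $$ (of_digits n d (\<lambda>k. if k \<in> \<kappa> then digit n d k j else digit n d k i),
           of_digits n d (\<lambda>k. if k \<in> \<kappa> then digit n d k i else digit n d k j)))"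

end

theory Submission
  imports Defs
begin

lemma digit_Suc_Suc: "digit n (Suc d) (Suc k) i = digit n d k i"
  unfolding digit_def by simp

lemma digit_Suc_0: "digit n (Suc d) 0 i = i div n ^ d mod n"
  unfolding digit_def by simp

lemma of_digits_Suc: "of_digits n (Suc d) f = f 0 * n ^ d + of_digits n d (\<lambda>k. f (Suc k))"
  unfolding of_digits_def by (subst sum.lessThan_Suc_shift) simp

lemma of_digits_cong: "(\<And>k. k < d \<Longrightarrow> f k = g k) \<Longrightarrow> of_digits n d f = of_digits n d g"
  unfolding of_digits_def by (rule sum.cong) auto

lemma arith_digit:
  fixes q r n e m :: nat
  shows "(q * n ^ (Suc m + e) + r) div n ^ e mod n = r div n ^ e mod n"
proof (cases "n = 0")
  case True then show ?thesis by (cases e) auto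
next
  case False
  have "q * n ^ (Suc m + e) + r = r + (q * n ^ Suc m) * n ^ e" by (simp add: power_add algebra_simps)
  hence "(q * n ^ (Suc m + e) + r) div n ^ e = q * n ^ Suc m + r div n ^ e"
    using False by (simp only: div_mult_self1 power_not_zero) simp
  moreover have "(q * n ^ Suc m + r div n ^ e) mod n = r div n ^ e mod n"
    by (simp add: mod_add_left_eq[symmetric])
  ultimately show ?thesis by simp
qed

lemma digit_shift:
  assumes "k < d"
  shows "digit n d k (q * n ^ d + r) = digit n d k r"
proof -
  have d: "d = Suc k + (d - 1 - k)" using assms by simp
  show ?thesis unfolding digit_def by (subst d, rule arith_digit)
qed

lemma digit_mod:
  assumes "k < d"
  shows "digit n d k (i mod n ^ d) = digit n d k i"
  using digit_shift[OF assms, where q="i div n ^ d" and r="i mod n ^ d" and n=n] by (metis div_mult_mod_eq)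

lemma digit_less: "i < n ^ d \<Longrightarrow> k < d \<Longrightarrow> digit n d k i < n"
  unfolding digit_def by (cases "n = 0") (auto simp: power_0_left)

lemma of_digits_digit_aux:
  "(\<forall>k<d. f k < n) \<longrightarrow> of_digits n d f < n ^ d \<and> (\<forall>k<d. digit n d k (of_digits n d f) = f k)"
proof (induction d arbitrary: f)
  case 0
  then show ?case by (simp add: of_digits_def)
next
  case (Suc d)
  show ?case
  proof
    assume f: "\<forall>k<Suc d. f k < n"
    let ?g = "\<lambda>k. f (Suc k)"
    have IH: "of_digits n d ?g < n ^ d" "\<forall>k<d. digit n d k (of_digits n d ?g) = ?g k"
      using Suc f by auto
    have f0: "f 0 < n" using f by auto
    have "f 0 * n ^ d + of_digits n d ?g < f 0 * n ^ d + n ^ d" using IH by simp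
    also have "\<dots> = (f 0 + 1) * n ^ d" by simp
    also have "\<dots> \<le> n * n ^ d" using f0 by (intro mult_right_mono) auto
    finally have bnd: "of_digits n (Suc d) f < n ^ Suc d" by (simp add: of_digits_Suc)
    have "digit n (Suc d) k (of_digits n (Suc d) f) = f k" if "k < Suc d" for k
    proof (cases k)
      case 0
      have "(f 0 * n ^ d + of_digits n d ?g) div n ^ d = f 0"
        using IH(1) f0 by (simp add: div_add1_eq)
      then show ?thesis using 0 f0 by (simp add: digit_Suc_0 of_digits_Suc)
    next
      case (Suc k')
      then have "k' < d" using that by simp
      then show ?thesis using Suc IH(2)
        by (simp add: digit_Suc_Suc of_digits_Suc digit_shift)
    qed
    then show "of_digits n (Suc d) f < n ^ Suc d \<and> (\<forall>k<Suc d. digit n (Suc d) k (of_digits n (Suc d) f) = f k)"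
      using bnd by blast
  qed
qed

lemma of_digits_less: "(\<And>k. k < d \<Longrightarrow> f k < n) \<Longrightarrow> of_digits n d f < n ^ d"
  using of_digits_digit_aux by blast

lemma digit_of_digits: "(\<And>k. k < d \<Longrightarrow> f k < n) \<Longrightarrow> k < d \<Longrightarrow> digit n d k (of_digits n d f) = f k"
  using of_digits_digit_aux by blast

lemma of_digits_digit: "i < n ^ d \<Longrightarrow> of_digits n d (\<lambda>k. digit n d k i) = i"
proof (induction d arbitrary: i)
  case 0 then show ?case by (simp add: of_digits_def)
next
  case (Suc d)
  have "n > 0" using Suc.prems by (cases n) auto
  have IH: "of_digits n d (\<lambda>k. digit n d k (i mod n ^ d)) = i mod n ^ d"
    using Suc.IH \<open>n > 0\<close> by simp
  have eq: "of_digits n d (\<lambda>k. digit n d k i) = i mod n ^ d"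
    by (subst IH[symmetric], rule of_digits_cong) (simp add: digit_mod)
  have "i div n ^ d < n" using Suc.prems by (simp add: less_mult_imp_div_less mult.commute)
  then show ?case
    by (simp add: of_digits_Suc digit_Suc_Suc digit_Suc_0 eq, metis div_mult_mod_eq)
qed


lemma kron_prod_0: "kron_prod 0 B = 1\<^sub>m 1"
  unfolding kron_prod_def by simp

lemma kron_prod_Suc: "kron_prod (Suc d) B = kron (B 0) (kron_prod d (\<lambda>k. B (Suc k)))"
  unfolding kron_prod_def
  by (simp add: upt_conv_Cons map_Suc_upt[symmetric] foldr_map o_def del: upt_Suc)

lemma kron_prod_entry:
  "(\<forall>k<d. B k \<in> carrier_mat n n) \<longrightarrow> kron_prod d B \<in> carrier_mat (n ^ d) (n ^ d) \<and>
    (\<forall>i j. i < n ^ d \<longrightarrow> j < n ^ d \<longrightarrow>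
      kron_prod d B $$ (i, j) = (\<Prod>k<d. B k $$ (digit n d k i, digit n d k j)))"
proof (induction d arbitrary: B)
  case 0
  then show ?case by (simp add: kron_prod_0)
next
  case (Suc d)
  show ?case
  proof
    assume BB: "\<forall>k<Suc d. B k \<in> carrier_mat n n"
    let ?P = "kron_prod d (\<lambda>k. B (Suc k))"
    have IH: "?P \<in> carrier_mat (n ^ d) (n ^ d)"
      "\<And>i j. i < n ^ d \<Longrightarrow> j < n ^ d \<Longrightarrow> ?P $$ (i, j) = (\<Prod>k<d. B (Suc k) $$ (digit n d k i, digit n d k j))"
      using Suc BB by auto
    have B0: "B 0 \<in> carrier_mat n n" using BB by auto
    have car: "kron_prod (Suc d) B \<in> carrier_mat (n ^ Suc d) (n ^ Suc d)"
      using IH(1) B0 by (simp add: kron_prod_Suc kron_def)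
    have "kron_prod (Suc d) B $$ (i, j) = (\<Prod>k<Suc d. B k $$ (digit n (Suc d) k i, digit n (Suc d) k j))"
      if ij: "i < n ^ Suc d" "j < n ^ Suc d" for i j
    proof -
      have npos: "n > 0" using ij by (cases n) auto
      have "i div n ^ d < n" "j div n ^ d < n" using ij by (simp_all add: less_mult_imp_div_less mult.commute)
      hence d0: "digit n (Suc d) 0 i = i div n ^ d" "digit n (Suc d) 0 j = j div n ^ d"
        by (simp_all add: digit_Suc_0)
      have im: "i mod n ^ d < n ^ d" "j mod n ^ d < n ^ d" using npos by simp_all
      have "kron_prod (Suc d) B $$ (i, j) = B 0 $$ (i div n ^ d, j div n ^ d) * ?P $$ (i mod n ^ d, j mod n ^ d)"
        using IH(1) B0 ij by (simp add: kron_prod_Suc kron_def)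
      also have "\<dots> = B 0 $$ (i div n ^ d, j div n ^ d) * (\<Prod>k<d. B (Suc k) $$ (digit n d k i, digit n d k j))"
        using IH(2)[OF im] by (simp add: digit_mod)
      also have "\<dots> = (\<Prod>k<Suc d. B k $$ (digit n (Suc d) k i, digit n (Suc d) k j))"
        by (subst prod.lessThan_Suc_shift) (simp add: d0 digit_Suc_Suc)
      finally show ?thesis .
    qed
    then show "kron_prod (Suc d) B \<in> carrier_mat (n ^ Suc d) (n ^ Suc d) \<and>
    (\<forall>i j. i < n ^ Suc d \<longrightarrow> j < n ^ Suc d \<longrightarrow>
      kron_prod (Suc d) B $$ (i, j) = (\<Prod>k<Suc d. B k $$ (digit n (Suc d) k i, digit n (Suc d) k j)))"
      using car by blast
  qed
qed

lemma kron_prod_carrier: "(\<And>k. k < d \<Longrightarrow> B k \<in> carrier_mat n n) \<Longrightarrow> kron_prod d B \<in> carrier_mat (n ^ d) (n ^ d)"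
  using kron_prod_entry by blast

lemma kron_prod_index: "(\<And>k. k < d \<Longrightarrow> B k \<in> carrier_mat n n) \<Longrightarrow> i < n ^ d \<Longrightarrow> j < n ^ d \<Longrightarrow>
  kron_prod d B $$ (i, j) = (\<Prod>k<d. B k $$ (digit n d k i, digit n d k j))"
  using kron_prod_entry by blast

abbreviation PI :: "nat \<Rightarrow> nat \<Rightarrow> (nat \<Rightarrow> nat) set" where
  "PI n d \<equiv> PiE {..<d} (\<lambda>_. {..<n})"

definition dg :: "nat \<Rightarrow> nat \<Rightarrow> nat \<Rightarrow> nat \<Rightarrow> nat" where
  "dg n d i = restrict (\<lambda>k. digit n d k i) {..<d}"

lemma dg_PI: "i < n ^ d \<Longrightarrow> dg n d i \<in> PI n d"
  unfolding dg_def using digit_less by auto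

lemma of_digits_dg: "i < n ^ d \<Longrightarrow> of_digits n d (dg n d i) = i"
  unfolding dg_def by (subst of_digits_cong[where g="\<lambda>k. digit n d k i"]) (auto simp: of_digits_digit)

lemma of_digits_PI: "h \<in> PI n d \<Longrightarrow> of_digits n d h < n ^ d"
  by (rule of_digits_less) auto

lemma digit_of_digits_PI: "h \<in> PI n d \<Longrightarrow> k < d \<Longrightarrow> digit n d k (of_digits n d h) = h k"
  by (rule digit_of_digits) auto

lemma bij_of_digits: "bij_betw (of_digits n d) (PI n d) {..<n ^ d}"
proof (rule bij_betw_imageI)
  show "inj_on (of_digits n d) (PI n d)"
  proof (rule inj_onI)
    fix f g assume f: "f \<in> PI n d" and g: "g \<in> PI n d" and eq: "of_digits n d f = of_digits n d g"
    show "f = g"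
    proof (rule PiE_ext[OF f g])
      fix k assume "k \<in> {..<d}"
      then show "f k = g k" using digit_of_digits_PI[OF f] digit_of_digits_PI[OF g] eq by force
    qed
  qed
  show "of_digits n d ` PI n d = {..<n ^ d}"
  proof
    show "of_digits n d ` PI n d \<subseteq> {..<n ^ d}" using of_digits_PI by auto
    show "{..<n ^ d} \<subseteq> of_digits n d ` PI n d"
    proof
      fix i assume "i \<in> {..<n ^ d}"
      then have "i = of_digits n d (dg n d i)" "dg n d i \<in> PI n d"
        using of_digits_dg dg_PI by auto
      then show "i \<in> of_digits n d ` PI n d" by blast
    qed
  qed
qed

lemma sum_PI: "(\<Sum>c<n ^ d. g c) = (\<Sum>h\<in>PI n d. g (of_digits n d h))"
  using sum.reindex_bij_betw[OF bij_of_digits, of g] by simp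

lemma mult_index_sum:
  assumes "A \<in> carrier_mat N N" "C \<in> carrier_mat N N" "i < N" "j < N"
  shows "(A * C) $$ (i, j) = (\<Sum>c<N. A $$ (i, c) * C $$ (c, j))"
  using assms by (simp add: scalar_prod_def lessThan_atLeast0)


lemma ptrans_index:
  "i < n ^ d \<Longrightarrow> j < n ^ d \<Longrightarrow> ptrans n d \<kappa> M $$ (i, j) =
     M $$ (of_digits n d (\<lambda>k. if k \<in> \<kappa> then digit n d k j else digit n d k i),
           of_digits n d (\<lambda>k. if k \<in> \<kappa> then digit n d k i else digit n d k j))"
  unfolding ptrans_def by simp

lemma ptrans_carrier: "ptrans n d \<kappa> M \<in> carrier_mat (n ^ d) (n ^ d)"
  unfolding ptrans_def by simp

definition sw :: "nat set \<Rightarrow> (nat \<Rightarrow> nat) \<Rightarrow> (nat \<Rightarrow> nat) \<Rightarrow> nat \<Rightarrow> nat" where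
  "sw \<kappa> f g = (\<lambda>k. if k \<in> \<kappa> then g k else f k)"

lemma sw_PI: "f \<in> PI n d \<Longrightarrow> g \<in> PI n d \<Longrightarrow> sw \<kappa> f g \<in> PI n d"
  unfolding sw_def by (auto simp: PiE_def extensional_def)

lemma sw_sw1: "sw \<kappa> (sw \<kappa> c e) (sw \<kappa> e c) = c" unfolding sw_def by auto
lemma sw_sw2: "sw \<kappa> (sw \<kappa> e c) (sw \<kappa> c e) = e" unfolding sw_def by auto

lemma delta_prod:
  assumes e: "e \<in> PI n d" and b: "b < n ^ d"
  shows "(\<Prod>k<d. (if e k = digit n d k b then 1 else 0) :: 'a::comm_semiring_1) = (if e = dg n d b then 1 else 0)"
proof (cases "e = dg n d b")
  case True
  then show ?thesis by (simp add: dg_def)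
next
  case False
  then obtain k where k: "k < d" "e k \<noteq> dg n d b k"
    using PiE_ext[OF e dg_PI[OF b]] by auto
  then have "e k \<noteq> digit n d k b" by (simp add: dg_def)
  then have "(\<Prod>k<d. (if e k = digit n d k b then 1 else 0) :: 'a) = 0"
    using k by (intro prod_zero) auto
  then show ?thesis using False by simp
qed

lemma amb: "(a::'a::comm_semiring_1) * m * b = a * b * m" by (simp add: ac_simps)

lemma main_eq:
  fixes n d :: nat and B :: "nat \<Rightarrow> 'a::field mat" and M :: "'a mat" and \<kappa> :: "nat set"
  assumes B: "\<And>k. k < d \<Longrightarrow> B k \<in> carrier_mat n n"
    and M: "M \<in> carrier_mat (n ^ d) (n ^ d)"
  shows "ptrans n d \<kappa> (kron_prod d B * M) =
           kron_prod d (\<lambda>k. if k \<in> \<kappa> then 1\<^sub>m n else B k) * ptrans n d \<kappa> M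
             * kron_prod d (\<lambda>k. if k \<in> \<kappa> then transpose_mat (B k) else 1\<^sub>m n)"
proof -
  define N where "N = n ^ d"
  define Lk where "Lk = (\<lambda>k. if k \<in> \<kappa> then 1\<^sub>m n else B k)"
  define Rk where "Rk = (\<lambda>k. if k \<in> \<kappa> then transpose_mat (B k) else 1\<^sub>m n)"
  define P where "P = kron_prod d B"
  define L where "L = kron_prod d Lk"
  define R where "R = kron_prod d Rk"
  define X where "X = ptrans n d \<kappa> M"
  define Od where "Od = of_digits n d"
  define D where "D = (\<lambda>k i. digit n d k i)"
  have LkC: "\<And>k. k < d \<Longrightarrow> Lk k \<in> carrier_mat n n" using B by (simp add: Lk_def)
  have RkC: "\<And>k. k < d \<Longrightarrow> Rk k \<in> carrier_mat n n" using B by (simp add: Rk_def)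
  have PC: "P \<in> carrier_mat N N" unfolding P_def N_def by (rule kron_prod_carrier[OF B])
  have LC: "L \<in> carrier_mat N N" unfolding L_def N_def by (rule kron_prod_carrier[OF LkC])
  have RC: "R \<in> carrier_mat N N" unfolding R_def N_def by (rule kron_prod_carrier[OF RkC])
  have XC: "X \<in> carrier_mat N N" unfolding X_def N_def by (rule ptrans_carrier)
  have MC: "M \<in> carrier_mat N N" using M by (simp add: N_def)
  have finPI: "finite (PI n d)" by (simp add: finite_PiE)
  have DO: "\<And>h k. h \<in> PI n d \<Longrightarrow> k < d \<Longrightarrow> D k (Od h) = h k"
    unfolding D_def Od_def by (rule digit_of_digits_PI)
  have OPI: "\<And>h. h \<in> PI n d \<Longrightarrow> Od h < N" unfolding Od_def N_def by (rule of_digits_PI)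
  have Dless: "\<And>i k. i < N \<Longrightarrow> k < d \<Longrightarrow> D k i < n" unfolding D_def N_def by (rule digit_less)
  have sumPI: "\<And>g. (\<Sum>c<N. g c) = (\<Sum>h\<in>PI n d. g (Od h))" unfolding N_def Od_def by (rule sum_PI)
  have entry: "ptrans n d \<kappa> (P * M) $$ (i, j) = (L * X * R) $$ (i, j)" if ij: "i < N" "j < N" for i j
  proof -
    define ak where "ak = (\<lambda>k. if k \<in> \<kappa> then D k j else D k i)"
    define bk where "bk = (\<lambda>k. if k \<in> \<kappa> then D k i else D k j)"
    define a where "a = Od ak"
    define b where "b = Od bk"
    have a: "a < N" unfolding a_def Od_def N_def
      by (rule of_digits_less) (use ij Dless in \<open>auto simp: ak_def N_def\<close>)
    have b: "b < N" unfolding b_def Od_def N_def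
      by (rule of_digits_less) (use ij Dless in \<open>auto simp: bk_def N_def\<close>)
    have Da: "\<And>k. k < d \<Longrightarrow> D k a = ak k" unfolding a_def Od_def D_def
      by (rule digit_of_digits) (use ij Dless in \<open>auto simp: ak_def D_def\<close>)
    have Db: "\<And>k. k < d \<Longrightarrow> D k b = bk k" unfolding b_def Od_def D_def
      by (rule digit_of_digits) (use ij Dless in \<open>auto simp: bk_def D_def\<close>)
    define Bp where "Bp = (\<lambda>c. \<Prod>k<d. B k $$ (ak k, c k))"
    define Del where "Del = (\<lambda>e. \<Prod>k<d. (if e k = bk k then 1 else 0) :: 'a)"
    have LHS: "ptrans n d \<kappa> (P * M) $$ (i, j) = (\<Sum>h\<in>PI n d. Bp h * M $$ (Od h, b))"
    proof -
      have "ptrans n d \<kappa> (P * M) $$ (i, j) = (P * M) $$ (a, b)"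
        using ij unfolding a_def b_def Od_def ak_def bk_def D_def by (simp add: ptrans_index N_def)
      also have "\<dots> = (\<Sum>c<N. P $$ (a, c) * M $$ (c, b))"
        by (rule mult_index_sum[OF PC MC a b])
      also have "\<dots> = (\<Sum>h\<in>PI n d. P $$ (a, Od h) * M $$ (Od h, b))" by (rule sumPI)
      also have "\<dots> = (\<Sum>h\<in>PI n d. Bp h * M $$ (Od h, b))"
      proof (rule sum.cong[OF refl])
        fix h assume h: "h \<in> PI n d"
        have "P $$ (a, Od h) = (\<Prod>k<d. B k $$ (D k a, D k (Od h)))"
          unfolding P_def D_def using kron_prod_index[OF B] a OPI[OF h] by (simp add: N_def)
        also have "\<dots> = Bp h" unfolding Bp_def using Da DO[OF h] by (intro prod.cong) auto
        finally show "P $$ (a, Od h) * M $$ (Od h, b) = Bp h * M $$ (Od h, b)" by simp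
      qed
      finally show ?thesis .
    qed
    define F where "F = (\<lambda>g f. (\<Prod>k<d. Lk k $$ (D k i, f k)) * M $$ (Od (sw \<kappa> f g), Od (sw \<kappa> g f))
                             * (\<Prod>k<d. Rk k $$ (g k, D k j)))"
    have RHS1: "(L * X * R) $$ (i, j) = (\<Sum>g\<in>PI n d. \<Sum>f\<in>PI n d. F g f)"
    proof -
      have "(L * X * R) $$ (i, j) = (\<Sum>y<N. (L * X) $$ (i, y) * R $$ (y, j))"
        by (rule mult_index_sum[OF mult_carrier_mat[OF LC XC] RC ij])
      also have "\<dots> = (\<Sum>g\<in>PI n d. (L * X) $$ (i, Od g) * R $$ (Od g, j))" by (rule sumPI)
      also have "\<dots> = (\<Sum>g\<in>PI n d. \<Sum>f\<in>PI n d. F g f)"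
      proof (rule sum.cong[OF refl])
        fix g assume g: "g \<in> PI n d"
        have "(L * X) $$ (i, Od g) = (\<Sum>c<N. L $$ (i, c) * X $$ (c, Od g))"
          by (rule mult_index_sum[OF LC XC ij(1) OPI[OF g]])
        also have "\<dots> = (\<Sum>f\<in>PI n d. L $$ (i, Od f) * X $$ (Od f, Od g))" by (rule sumPI)
        finally have LX: "(L * X) $$ (i, Od g) = (\<Sum>f\<in>PI n d. L $$ (i, Od f) * X $$ (Od f, Od g))" .
        have Rg: "R $$ (Od g, j) = (\<Prod>k<d. Rk k $$ (g k, D k j))"
          unfolding R_def D_def using kron_prod_index[OF RkC] ij OPI[OF g] DO[OF g]
          by (simp add: N_def D_def)
        have "L $$ (i, Od f) * X $$ (Od f, Od g) * R $$ (Od g, j) = F g f" if f: "f \<in> PI n d" for f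
        proof -
          have Lf: "L $$ (i, Od f) = (\<Prod>k<d. Lk k $$ (D k i, f k))"
            unfolding L_def D_def using kron_prod_index[OF LkC] ij OPI[OF f] DO[OF f]
            by (simp add: N_def D_def)
          have "X $$ (Od f, Od g) = M $$ (Od (\<lambda>k. if k \<in> \<kappa> then D k (Od g) else D k (Od f)),
                                        Od (\<lambda>k. if k \<in> \<kappa> then D k (Od f) else D k (Od g)))"
            using OPI[OF f] OPI[OF g] unfolding X_def Od_def D_def N_def by (simp add: ptrans_index)
          also have "Od (\<lambda>k. if k \<in> \<kappa> then D k (Od g) else D k (Od f)) = Od (sw \<kappa> f g)"
            unfolding Od_def D_def by (rule of_digits_cong) (auto simp: sw_def digit_of_digits_PI[OF f] digit_of_digits_PI[OF g])
          also have "Od (\<lambda>k. if k \<in> \<kappa> then D k (Od f) else D k (Od g)) = Od (sw \<kappa> g f)"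
            unfolding Od_def D_def by (rule of_digits_cong) (auto simp: sw_def digit_of_digits_PI[OF f] digit_of_digits_PI[OF g])
          finally show ?thesis using Lf Rg by (simp add: F_def)
        qed
        then show "(L * X) $$ (i, Od g) * R $$ (Od g, j) = (\<Sum>f\<in>PI n d. F g f)"
          unfolding LX sum_distrib_right by (intro sum.cong) auto
      qed
      finally show ?thesis .
    qed
    have RHS2: "(\<Sum>g\<in>PI n d. \<Sum>f\<in>PI n d. F g f) = (\<Sum>(c, e)\<in>PI n d \<times> PI n d. Bp c * Del e * M $$ (Od c, Od e))"
    proof -
      have "(\<Sum>g\<in>PI n d. \<Sum>f\<in>PI n d. F g f) = (\<Sum>(g, f)\<in>PI n d \<times> PI n d. F g f)"
        by (rule sum.cartesian_product)
      also have "\<dots> = (\<Sum>(c, e)\<in>PI n d \<times> PI n d. Bp c * Del e * M $$ (Od c, Od e))"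
      proof -
      have "(\<Sum>(c, e)\<in>PI n d \<times> PI n d. Bp c * Del e * M $$ (Od c, Od e)) = (\<Sum>(g, f)\<in>PI n d \<times> PI n d. F g f)"
      proof (rule sum.reindex_bij_witness[where i = "\<lambda>(g, f). (sw \<kappa> f g, sw \<kappa> g f)"
                                            and j = "\<lambda>(c, e). (sw \<kappa> e c, sw \<kappa> c e)"], goal_cases)
        case (1 a) then show ?case by (clarsimp simp: sw_sw1 sw_sw2)
      next
        case (2 a) then show ?case by (clarsimp simp: sw_PI)
      next
        case (3 a) then show ?case by (clarsimp simp: sw_sw1 sw_sw2)
      next
        case (4 a) then show ?case by (clarsimp simp: sw_PI)
      next
        case (5 x)
        then have x: "x \<in> PI n d \<times> PI n d" by simp
        show ?case
        proof -
          obtain c e where x': "x = (c, e)" by (cases x)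
          have c: "c \<in> PI n d" and e: "e \<in> PI n d" using x x' by blast+
          have "(\<Prod>k<d. Lk k $$ (D k i, sw \<kappa> c e k)) * (\<Prod>k<d. Rk k $$ (sw \<kappa> e c k, D k j)) =
                (\<Prod>k<d. Lk k $$ (D k i, sw \<kappa> c e k) * Rk k $$ (sw \<kappa> e c k, D k j))"
            by (rule prod.distrib[symmetric])
          also have "\<dots> = (\<Prod>k<d. B k $$ (ak k, c k) * (if e k = bk k then 1 else 0))"
          proof (rule prod.cong[OF refl])
            fix k assume "k \<in> {..<d}"
            then have k: "k < d" by simp
            have ck: "c k < n" and ek: "e k < n" using c e k by auto
            have Dik: "D k i < n" and Djk: "D k j < n" using Dless ij k by auto
            show "Lk k $$ (D k i, sw \<kappa> c e k) * Rk k $$ (sw \<kappa> e c k, D k j) =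
                  B k $$ (ak k, c k) * (if e k = bk k then 1 else 0)"
              using B[OF k] ck ek Dik Djk
              by (cases "k \<in> \<kappa>") (auto simp: Lk_def Rk_def sw_def ak_def bk_def)
          qed
          also have "\<dots> = Bp c * Del e" unfolding Bp_def Del_def by (rule prod.distrib)
          finally have calc: "(\<Prod>k<d. Lk k $$ (D k i, sw \<kappa> c e k)) * (\<Prod>k<d. Rk k $$ (sw \<kappa> e c k, D k j)) = Bp c * Del e" .
          have "F (sw \<kappa> e c) (sw \<kappa> c e) = ((\<Prod>k<d. Lk k $$ (D k i, sw \<kappa> c e k)) * (\<Prod>k<d. Rk k $$ (sw \<kappa> e c k, D k j))) * M $$ (Od c, Od e)"
            unfolding F_def sw_sw1 sw_sw2 by (rule amb)
          then show ?thesis using x' calc by simp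
        qed
      qed
      then show ?thesis by simp
      qed
      finally show ?thesis .
    qed
    have RHS3: "(\<Sum>(c, e)\<in>PI n d \<times> PI n d. Bp c * Del e * M $$ (Od c, Od e)) = (\<Sum>h\<in>PI n d. Bp h * M $$ (Od h, b))"
    proof -
      have "(\<Sum>(c, e)\<in>PI n d \<times> PI n d. Bp c * Del e * M $$ (Od c, Od e)) =
            (\<Sum>c\<in>PI n d. \<Sum>e\<in>PI n d. Bp c * Del e * M $$ (Od c, Od e))"
        by (rule sum.cartesian_product[symmetric])
      also have "\<dots> = (\<Sum>c\<in>PI n d. Bp c * M $$ (Od c, b))"
      proof (rule sum.cong[OF refl])
        fix c assume c: "c \<in> PI n d"
        have "(\<Sum>e\<in>PI n d. Bp c * Del e * M $$ (Od c, Od e)) =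
              (\<Sum>e\<in>PI n d. if e = dg n d b then Bp c * M $$ (Od c, Od e) else 0)"
        proof (rule sum.cong[OF refl])
          fix e assume e: "e \<in> PI n d"
          have "Del e = (\<Prod>k<d. (if e k = digit n d k b then 1 else 0))"
            unfolding Del_def using Db by (intro prod.cong) (auto simp: D_def)
          also have "\<dots> = (if e = dg n d b then 1 else 0)"
            by (rule delta_prod[OF e]) (use b in \<open>simp add: N_def\<close>)
          finally show "Bp c * Del e * M $$ (Od c, Od e) = (if e = dg n d b then Bp c * M $$ (Od c, Od e) else 0)"
            by simp
        qed
        also have "\<dots> = Bp c * M $$ (Od c, Od (dg n d b))"
          using dg_PI[of b n d] b finPI by (simp add: N_def)
        also have "Od (dg n d b) = b" unfolding Od_def using b by (simp add: N_def of_digits_dg)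
        finally show "(\<Sum>e\<in>PI n d. Bp c * Del e * M $$ (Od c, Od e)) = Bp c * M $$ (Od c, b)" .
      qed
      finally show ?thesis .
    qed
    show ?thesis by (simp only: LHS RHS1 RHS2 RHS3)
  qed
  have LXR: "L * X * R \<in> carrier_mat N N" using LC XC RC by simp
  have "ptrans n d \<kappa> (P * M) = L * X * R"
  proof (rule eq_matI)
    fix i j assume "i < dim_row (L * X * R)" "j < dim_col (L * X * R)"
    then have "i < N" "j < N" using LXR by auto
    then show "ptrans n d \<kappa> (P * M) $$ (i, j) = (L * X * R) $$ (i, j)"
      by (rule entry)
  next
    show "dim_row (ptrans n d \<kappa> (P * M)) = dim_row (L * X * R)"
      using LC RC ptrans_carrier[of n d \<kappa> "P * M"] by (simp add: N_def)
  next
    show "dim_col (ptrans n d \<kappa> (P * M)) = dim_col (L * X * R)"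
      using LC RC ptrans_carrier[of n d \<kappa> "P * M"] by (simp add: N_def)
  qed
  then show ?thesis unfolding P_def L_def R_def X_def Lk_def Rk_def .
qed


context vec_space
begin

lemma rank_col_space: "rank A = vectorspace.dim class_ring (vs (col_space A))"
  unfolding rank_def col_space_def by simp

lemma rank_mult_right:
  assumes X: "X \<in> carrier_mat n n" and R: "R \<in> carrier_mat n n" and R': "R' \<in> carrier_mat n n"
    and RR': "R * R' = 1\<^sub>m n" and R'R: "R' * R = 1\<^sub>m n"
  shows "rank (X * R) = rank X"
proof -
  have inv: "invertible_mat (transpose_mat R)"
    unfolding invertible_mat_def inverts_mat_def
  proof (intro conjI exI)
    show "square_mat (transpose_mat R)" using R by simp
    show "transpose_mat R * transpose_mat R' = 1\<^sub>m (dim_row (transpose_mat R))"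
      using R R' R'R transpose_mult[OF R' R] by simp
    show "transpose_mat R' * transpose_mat R = 1\<^sub>m (dim_row (transpose_mat R'))"
      using R R' RR' transpose_mult[OF R R'] by simp
  qed
  have "col_space (X * R) = row_space (transpose_mat (X * R))"
    by (rule col_space_eq_row_space_transpose)
  also have "\<dots> = row_space (transpose_mat R * transpose_mat X)"
    using transpose_mult[OF X R] by simp
  also have "\<dots> = row_space (transpose_mat X)"
    by (rule row_space_is_preserved[OF inv]) (use R X in auto)
  also have "\<dots> = col_space X" by (rule col_space_eq_row_space_transpose[symmetric])
  finally show ?thesis by (simp add: rank_col_space)
qed

lemma rank_mult_left:
  assumes X: "X \<in> carrier_mat n n" and L: "L \<in> carrier_mat n n" and L': "L' \<in> carrier_mat n n"
    and L'L: "L' * L = 1\<^sub>m n"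
  shows "rank (L * X) = rank X"
proof -
  define U where "U = col_space X"
  define U' where "U' = col_space (L * X)"
  define T where "T = (\<lambda>v. L *\<^sub>v v)"
  have LX: "L * X \<in> carrier_mat n n" using L X by simp
  have U: "U = {y \<in> carrier_vec n. \<exists>x\<in>carrier_vec n. X *\<^sub>v x = y}"
    unfolding U_def using col_space_eq[OF X] X by simp
  have U'eq: "U' = {y \<in> carrier_vec n. \<exists>x\<in>carrier_vec n. (L * X) *\<^sub>v x = y}"
    unfolding U'_def using col_space_eq[OF LX] L X by simp
  have img: "T ` U = U'"
  proof
    show "T ` U \<subseteq> U'"
    proof
      fix y assume "y \<in> T ` U"
      then obtain x where x: "x \<in> carrier_vec n" and y: "y = L *\<^sub>v (X *\<^sub>v x)" unfolding U T_def by auto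
      then have "y = (L * X) *\<^sub>v x" using L X by simp
      then show "y \<in> U'" unfolding U'eq using x L X by auto
    qed
    show "U' \<subseteq> T ` U"
    proof
      fix y assume "y \<in> U'"
      then obtain x where x: "x \<in> carrier_vec n" and y: "y = (L * X) *\<^sub>v x" unfolding U'eq by auto
      then have "y = T (X *\<^sub>v x)" using L X by (simp add: T_def)
      moreover have "X *\<^sub>v x \<in> U" unfolding U using x X by auto
      ultimately show "y \<in> T ` U" by blast
    qed
  qed
  have Usub: "U \<subseteq> carrier_vec n" unfolding U by auto
  have U'sub: "U' \<subseteq> carrier_vec n" unfolding U'eq by auto
  have colsX: "set (cols X) \<subseteq> carrier_vec n" using X cols_dim[of X] by simp
  have colsLX: "set (cols (L * X)) \<subseteq> carrier_vec n" using L cols_dim[of "L * X"] by simp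
  have vsU: "vectorspace class_ring (vs U)"
    unfolding U_def col_space_def by (rule subspace_is_vs[OF span_is_subspace[OF colsX]])
  have vsU': "vectorspace class_ring (vs U')"
    unfolding U'_def col_space_def by (rule subspace_is_vs[OF span_is_subspace[OF colsLX]])
  have fd: "vectorspace.fin_dim class_ring (vs U)"
    unfolding U_def col_space_def by (rule fin_dim_span_cols[OF X])
  have lm: "linear_map class_ring (vs U) (vs U') T"
    unfolding linear_map_def mod_hom_def mod_hom_axioms_def
  proof (intro conjI)
    show "vectorspace class_ring (vs U)" by (rule vsU)
    show "vectorspace class_ring (vs U')" by (rule vsU')
    show "module class_ring (vs U)" using vsU by (simp add: vectorspace_def)
    show "module class_ring (vs U')" using vsU' by (simp add: vectorspace_def)
    have "T \<in> carrier (vs U) \<rightarrow> carrier (vs U')" using img by auto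
    moreover have "\<forall>m1 m2. m1 \<in> carrier (vs U) \<and> m2 \<in> carrier (vs U) \<longrightarrow>
       T (m1 \<oplus>\<^bsub>vs U\<^esub> m2) = T m1 \<oplus>\<^bsub>vs U'\<^esub> T m2"
      using Usub L by (auto simp: T_def intro!: mult_add_distrib_mat_vec)
    moreover have "\<forall>r m. r \<in> carrier class_ring \<and> m \<in> carrier (vs U) \<longrightarrow>
       T (r \<odot>\<^bsub>vs U\<^esub> m) = r \<odot>\<^bsub>vs U'\<^esub> T m"
      using Usub L by (auto simp: T_def intro!: mult_mat_vec)
    ultimately show "T \<in> LinearCombinations.module_hom class_ring (vs U) (vs U')" unfolding LinearCombinations.module_hom_def
      by blast
  qed
  have inj: "inj_on T (carrier (vs U))"
  proof (rule inj_onI)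
    fix x y assume x: "x \<in> carrier (vs U)" and y: "y \<in> carrier (vs U)" and eq: "T x = T y"
    have xc: "x \<in> carrier_vec n" and yc: "y \<in> carrier_vec n" using x y Usub by auto
    have "x = (L' * L) *\<^sub>v x" using xc L'L by simp
    also have "\<dots> = L' *\<^sub>v T x" using xc L L' by (simp add: T_def)
    also have "\<dots> = L' *\<^sub>v T y" using eq by simp
    also have "\<dots> = (L' * L) *\<^sub>v y" using yc L L' by (simp add: T_def)
    also have "\<dots> = y" using yc L'L by simp
    finally show "x = y" .
  qed
  have "vectorspace.dim class_ring (vs U) = vectorspace.dim class_ring (vs U')"
    by (rule linear_map.dim_eq[OF lm fd inj]) (use img in simp)
  then show ?thesis by (simp add: rank_col_space U_def U'_def)
qed

end


lemma kron_prod_cong: "(\<And>k. k < d \<Longrightarrow> A k = A' k) \<Longrightarrow> kron_prod d A = kron_prod d A'"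
  unfolding kron_prod_def by (rule foldr_cong) auto

lemma kron_prod_mult:
  assumes A: "\<And>k. k < d \<Longrightarrow> A k \<in> carrier_mat n n" and C: "\<And>k. k < d \<Longrightarrow> C k \<in> carrier_mat n n"
  shows "kron_prod d A * kron_prod d C = kron_prod d (\<lambda>k. A k * C k)"
proof -
  have AC: "\<And>k. k < d \<Longrightarrow> A k * C k \<in> carrier_mat n n" using A C by (meson mult_carrier_mat)
  have KA: "kron_prod d A \<in> carrier_mat (n ^ d) (n ^ d)" by (rule kron_prod_carrier[OF A])
  have KC: "kron_prod d C \<in> carrier_mat (n ^ d) (n ^ d)" by (rule kron_prod_carrier[OF C])
  have KAC: "kron_prod d (\<lambda>k. A k * C k) \<in> carrier_mat (n ^ d) (n ^ d)" by (rule kron_prod_carrier[OF AC])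
  have entry: "(kron_prod d A * kron_prod d C) $$ (i, j) = kron_prod d (\<lambda>k. A k * C k) $$ (i, j)"
    if ij: "i < n ^ d" "j < n ^ d" for i j
  proof -
    have "(kron_prod d A * kron_prod d C) $$ (i, j) = (\<Sum>c<n ^ d. kron_prod d A $$ (i, c) * kron_prod d C $$ (c, j))"
      by (rule mult_index_sum[OF KA KC ij])
    also have "\<dots> = (\<Sum>h\<in>PI n d. kron_prod d A $$ (i, of_digits n d h) * kron_prod d C $$ (of_digits n d h, j))"
      by (rule sum_PI)
    also have "\<dots> = (\<Sum>h\<in>PI n d. \<Prod>k<d. A k $$ (digit n d k i, h k) * C k $$ (h k, digit n d k j))"
    proof (rule sum.cong[OF refl])
      fix h assume h: "h \<in> PI n d"
      have "kron_prod d A $$ (i, of_digits n d h) = (\<Prod>k<d. A k $$ (digit n d k i, h k))"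
        using kron_prod_index[OF A ij(1) of_digits_PI[OF h]] digit_of_digits_PI[OF h] by simp
      moreover have "kron_prod d C $$ (of_digits n d h, j) = (\<Prod>k<d. C k $$ (h k, digit n d k j))"
        using kron_prod_index[OF C of_digits_PI[OF h] ij(2)] digit_of_digits_PI[OF h] by simp
      ultimately show "kron_prod d A $$ (i, of_digits n d h) * kron_prod d C $$ (of_digits n d h, j) =
        (\<Prod>k<d. A k $$ (digit n d k i, h k) * C k $$ (h k, digit n d k j))"
        by (simp add: prod.distrib)
    qed
    also have "\<dots> = (\<Prod>k<d. \<Sum>x<n. A k $$ (digit n d k i, x) * C k $$ (x, digit n d k j))"
      by (rule prod_sum_PiE[symmetric]) auto
    also have "\<dots> = (\<Prod>k<d. (A k * C k) $$ (digit n d k i, digit n d k j))"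
    proof (rule prod.cong[OF refl])
      fix k assume "k \<in> {..<d}"
      then have k: "k < d" by simp
      show "(\<Sum>x<n. A k $$ (digit n d k i, x) * C k $$ (x, digit n d k j)) = (A k * C k) $$ (digit n d k i, digit n d k j)"
        by (rule mult_index_sum[OF A[OF k] C[OF k] digit_less[OF ij(1) k] digit_less[OF ij(2) k], symmetric])
    qed
    also have "\<dots> = kron_prod d (\<lambda>k. A k * C k) $$ (i, j)"
      by (rule kron_prod_index[OF AC ij, symmetric])
    finally show ?thesis .
  qed
  show ?thesis
  proof (rule eq_matI)
    fix i j assume "i < dim_row (kron_prod d (\<lambda>k. A k * C k))" "j < dim_col (kron_prod d (\<lambda>k. A k * C k))"
    then have "i < n ^ d" "j < n ^ d" using KAC by auto
    then show "(kron_prod d A * kron_prod d C) $$ (i, j) = kron_prod d (\<lambda>k. A k * C k) $$ (i, j)"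
      by (rule entry)
  qed (use KA KC KAC in auto)
qed

lemma kron_prod_one: "kron_prod d (\<lambda>_. 1\<^sub>m n) = (1\<^sub>m (n ^ d) :: 'a::comm_ring_1 mat)"
proof -
  have K: "kron_prod d (\<lambda>_. 1\<^sub>m n :: 'a mat) \<in> carrier_mat (n ^ d) (n ^ d)"
    by (rule kron_prod_carrier) simp
  show ?thesis
  proof (rule eq_matI)
    fix i j assume "i < dim_row (1\<^sub>m (n ^ d) :: 'a mat)" "j < dim_col (1\<^sub>m (n ^ d) :: 'a mat)"
    then have ij: "i < n ^ d" "j < n ^ d" by auto
    have "kron_prod d (\<lambda>_. 1\<^sub>m n :: 'a mat) $$ (i, j) = (\<Prod>k<d. (1\<^sub>m n :: 'a mat) $$ (digit n d k i, digit n d k j))"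
      by (rule kron_prod_index[OF _ ij]) simp
    also have "\<dots> = (\<Prod>k<d. (if dg n d i k = digit n d k j then 1 else 0))"
      using digit_less[OF ij(1)] digit_less[OF ij(2)] by (intro prod.cong) (auto simp: dg_def)
    also have "\<dots> = (if dg n d i = dg n d j then 1 else 0)"
      by (rule delta_prod[OF dg_PI[OF ij(1)] ij(2)])
    also have "\<dots> = (1\<^sub>m (n ^ d) :: 'a mat) $$ (i, j)"
    proof -
      have "dg n d i = dg n d j \<longleftrightarrow> i = j"
        using of_digits_dg[OF ij(1)] of_digits_dg[OF ij(2)] by metis
      then show ?thesis using ij by simp
    qed
    finally show "kron_prod d (\<lambda>_. 1\<^sub>m n :: 'a mat) $$ (i, j) = (1\<^sub>m (n ^ d) :: 'a mat) $$ (i, j)" .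
  qed (use K in auto)
qed


lemma inv_exists:
  assumes "A \<in> carrier_mat n n" "invertible_mat A"
  shows "\<exists>C. C \<in> carrier_mat n n \<and> A * C = 1\<^sub>m n \<and> C * A = 1\<^sub>m n"
proof -
  obtain C where AC: "A * C = 1\<^sub>m (dim_row A)" and CA: "C * A = 1\<^sub>m (dim_row C)"
    using assms(2) unfolding invertible_mat_def inverts_mat_def by blast
  have "dim_col C = n" using arg_cong[OF AC, of dim_col] assms(1) by simp
  moreover have "dim_row C = n" using arg_cong[OF CA, of dim_col] assms(1) by simp
  ultimately show ?thesis using AC CA assms(1) by (intro exI[of _ C]) auto
qed

theorem lemma3p9:
  fixes n d :: nat and B :: "nat \<Rightarrow> 'a::field mat" and M :: "'a mat" and \<kappa> :: "nat set"
  assumes B: "\<And>k. k < d \<Longrightarrow> B k \<in> carrier_mat n n"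
    and M: "M \<in> carrier_mat (n ^ d) (n ^ d)"
    and \<kappa>: "\<kappa> \<subseteq> {0..<d}"
  shows "ptrans n d \<kappa> (kron_prod d B * M) =
           kron_prod d (\<lambda>k. if k \<in> \<kappa> then 1\<^sub>m n else B k) * ptrans n d \<kappa> M
             * kron_prod d (\<lambda>k. if k \<in> \<kappa> then transpose_mat (B k) else 1\<^sub>m n)
         \<and> ((\<forall>k<d. invertible_mat (B k)) \<longrightarrow>
           vec_space.rank (n ^ d) (ptrans n d \<kappa> (kron_prod d B * M)) =
           vec_space.rank (n ^ d) (ptrans n d \<kappa> M))"
proof (intro conjI impI)
  show eq: "ptrans n d \<kappa> (kron_prod d B * M) =
           kron_prod d (\<lambda>k. if k \<in> \<kappa> then 1\<^sub>m n else B k) * ptrans n d \<kappa> M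
             * kron_prod d (\<lambda>k. if k \<in> \<kappa> then transpose_mat (B k) else 1\<^sub>m n)"
    by (rule main_eq[OF B M])
  assume inv: "\<forall>k<d. invertible_mat (B k)"
  have "\<forall>k. \<exists>C. k < d \<longrightarrow> C \<in> carrier_mat n n \<and> B k * C = 1\<^sub>m n \<and> C * B k = 1\<^sub>m n"
    using inv_exists B inv by blast
  then obtain Bi where Bi: "\<And>k. k < d \<Longrightarrow> Bi k \<in> carrier_mat n n \<and> B k * Bi k = 1\<^sub>m n \<and> Bi k * B k = 1\<^sub>m n"
    by metis
  define Lk where "Lk = (\<lambda>k. if k \<in> \<kappa> then 1\<^sub>m n else B k)"
  define Rk where "Rk = (\<lambda>k. if k \<in> \<kappa> then transpose_mat (B k) else 1\<^sub>m n)"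
  define Lk' where "Lk' = (\<lambda>k. if k \<in> \<kappa> then 1\<^sub>m n else Bi k)"
  define Rk' where "Rk' = (\<lambda>k. if k \<in> \<kappa> then transpose_mat (Bi k) else 1\<^sub>m n)"
  have LkC: "\<And>k. k < d \<Longrightarrow> Lk k \<in> carrier_mat n n" using B by (simp add: Lk_def)
  have RkC: "\<And>k. k < d \<Longrightarrow> Rk k \<in> carrier_mat n n" using B by (simp add: Rk_def)
  have Lk'C: "\<And>k. k < d \<Longrightarrow> Lk' k \<in> carrier_mat n n" using Bi by (simp add: Lk'_def)
  have Rk'C: "\<And>k. k < d \<Longrightarrow> Rk' k \<in> carrier_mat n n" using Bi by (simp add: Rk'_def)
  define N where "N = n ^ d"
  define L where "L = kron_prod d Lk"
  define R where "R = kron_prod d Rk"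
  define L' where "L' = kron_prod d Lk'"
  define R' where "R' = kron_prod d Rk'"
  define X where "X = ptrans n d \<kappa> M"
  have LC: "L \<in> carrier_mat N N" unfolding L_def N_def by (rule kron_prod_carrier[OF LkC])
  have RC: "R \<in> carrier_mat N N" unfolding R_def N_def by (rule kron_prod_carrier[OF RkC])
  have L'C: "L' \<in> carrier_mat N N" unfolding L'_def N_def by (rule kron_prod_carrier[OF Lk'C])
  have R'C: "R' \<in> carrier_mat N N" unfolding R'_def N_def by (rule kron_prod_carrier[OF Rk'C])
  have XC: "X \<in> carrier_mat N N" unfolding X_def N_def by (rule ptrans_carrier)
  have L'L: "L' * L = 1\<^sub>m N"
  proof -
    have "L' * L = kron_prod d (\<lambda>k. Lk' k * Lk k)"
      unfolding L'_def L_def by (rule kron_prod_mult[OF Lk'C LkC])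
    also have "\<dots> = kron_prod d (\<lambda>_. 1\<^sub>m n)"
      by (rule kron_prod_cong) (use Bi in \<open>auto simp: Lk_def Lk'_def\<close>)
    also have "\<dots> = 1\<^sub>m N" unfolding N_def by (rule kron_prod_one)
    finally show ?thesis .
  qed
  have tr: "\<And>k. k < d \<Longrightarrow> transpose_mat (B k) * transpose_mat (Bi k) = 1\<^sub>m n \<and>
                              transpose_mat (Bi k) * transpose_mat (B k) = 1\<^sub>m n"
  proof -
    fix k assume k: "k < d"
    have e1: "transpose_mat (Bi k * B k) = transpose_mat (B k) * transpose_mat (Bi k)"
      using Bi[OF k] B[OF k] by (intro transpose_mult) auto
    have e2: "transpose_mat (B k * Bi k) = transpose_mat (Bi k) * transpose_mat (B k)"
      using Bi[OF k] B[OF k] by (intro transpose_mult) auto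
    have h1: "Bi k * B k = 1\<^sub>m n" and h2: "B k * Bi k = 1\<^sub>m n" using Bi[OF k] by simp_all
    then show "transpose_mat (B k) * transpose_mat (Bi k) = 1\<^sub>m n \<and>
                     transpose_mat (Bi k) * transpose_mat (B k) = 1\<^sub>m n"
      using e1[unfolded h1 transpose_one, symmetric] e2[unfolded h2 transpose_one, symmetric] by blast
  qed
  have RR': "R * R' = 1\<^sub>m N"
  proof -
    have "R * R' = kron_prod d (\<lambda>k. Rk k * Rk' k)"
      unfolding R'_def R_def by (rule kron_prod_mult[OF RkC Rk'C])
    also have "\<dots> = kron_prod d (\<lambda>_. 1\<^sub>m n)"
      by (rule kron_prod_cong) (use tr in \<open>auto simp: Rk_def Rk'_def\<close>)
    also have "\<dots> = 1\<^sub>m N" unfolding N_def by (rule kron_prod_one)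
    finally show ?thesis .
  qed
  have R'R: "R' * R = 1\<^sub>m N"
  proof -
    have "R' * R = kron_prod d (\<lambda>k. Rk' k * Rk k)"
      unfolding R'_def R_def by (rule kron_prod_mult[OF Rk'C RkC])
    also have "\<dots> = kron_prod d (\<lambda>_. 1\<^sub>m n)"
      by (rule kron_prod_cong) (use tr in \<open>auto simp: Rk_def Rk'_def\<close>)
    also have "\<dots> = 1\<^sub>m N" unfolding N_def by (rule kron_prod_one)
    finally show ?thesis .
  qed
  have "vec_space.rank N (L * X * R) = vec_space.rank N (L * X)"
    by (rule vec_space.rank_mult_right[OF mult_carrier_mat[OF LC XC] RC R'C RR' R'R])
  also have "\<dots> = vec_space.rank N X"
    by (rule vec_space.rank_mult_left[OF XC LC L'C L'L])
  finally have "vec_space.rank N (L * X * R) = vec_space.rank N X" .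
  then show "vec_space.rank (n ^ d) (ptrans n d \<kappa> (kron_prod d B * M)) = vec_space.rank (n ^ d) (ptrans n d \<kappa> M)"
    unfolding eq N_def L_def R_def X_def Lk_def Rk_def .
qed

end
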